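(* Let $k\geq2$ and let $W\subseteq\mathbb{Z}_{3k}$ be such that for every $i\in\mathbb{Z}_{3k}$, $|x^i\cap W|\geq1$ and $|C^i\cap\overline W|\geq2$, where $\overline W=\mathbb{Z}_{3k}\setminus W$. Let $i\in\overline W$ be such that $\overline W\cap[i+2k,i+2k+\omega(i)]_{3k}\neq\emptyset$. Then there exists a cover $\tilde x$ of $C^k_{3k}$ with $|\tilde x|=4$ and $\tilde x\cap W=\emptyset$.
   Context: $\mathbb{Z}_{3k}=\{0,\dots,3k-1\}$ with addition modulo $3k$; $[a,b]_{3k}$ is the cyclic closed interval from $a$ to $b$. $C^i=\{i,\dots,i+k-1\}$ (mod $3k$), $C^k_{3k}$ is the $3k\times3k$ $0,1$ matrix whose $i$-th row is the incidence vector of $C^i$, and a cover is a subset $x\subseteq\mathbb{Z}_{3k}$ meeting every $C^i$. $x^i=\{i,i+k,i+2k\}$. For $i\in\overline W$, $\omega(i)=\min\{t\geq0: i+k+t\in\overline W\}$ (well defined since $|C^{i+k}\cap\overline W|\ge2$). *)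

theory Defs
  imports Main
begin

text \<open>Z_{3k} is modelled as {0..<3*k} :: nat set with arithmetic mod 3*k.\<close>

definition Zn :: "nat \<Rightarrow> nat set" where
  "Zn k = {0..<3*k}"

definition Cset :: "nat \<Rightarrow> nat \<Rightarrow> nat set" where
  "Cset k i = {(i + j) mod (3*k) | j. j < k}"

definition xset :: "nat \<Rightarrow> nat \<Rightarrow> nat set" where
  "xset k i = {i mod (3*k), (i + k) mod (3*k), (i + 2*k) mod (3*k)}"

text \<open>cyclic closed interval [a,b]_n: a, a+1, ..., b (mod n)\<close>
definition cinterval :: "nat \<Rightarrow> nat \<Rightarrow> nat \<Rightarrow> nat set" where
  "cinterval n a b = {(a + t) mod n | t. t \<le> (b mod n + n - a mod n) mod n}"

definition is_cover :: "nat \<Rightarrow> nat set \<Rightarrow> bool" where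
  "is_cover k x \<longleftrightarrow> x \<subseteq> Zn k \<and> (\<forall>i \<in> Zn k. x \<inter> Cset k i \<noteq> {})"

definition omega :: "nat \<Rightarrow> nat set \<Rightarrow> nat \<Rightarrow> nat" where
  "omega k Wc i = (LEAST t. (i + k + t) mod (3*k) \<in> Wc)"

end

theory Submission
  imports Defs
begin

lemma cint: assumes "w < (n::nat)" shows "((a+w) mod n + n - a mod n) mod n = w"
proof -
  define r where "r = a mod n"
  have rn: "r < n" using assms r_def by simp
  have e: "(a+w) mod n = (r + w) mod n" by (simp add: r_def mod_add_left_eq)
  show ?thesis
  proof (cases "r + w < n")
    case True
    then have "(a+w) mod n = r + w" using e by simp
    then show ?thesis using assms r_def by simp
  next
    case False
    then have "(r+w) mod n = (r+w-n) mod n" by (simp add: le_mod_geq)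
    also have "\<dots> = r + w - n" using rn assms by simp
    finally have "(a+w) mod n = r+w-n" using e by simp
    then show ?thesis using assms False r_def[symmetric] by simp
  qed
qed

lemma modinj: assumes "d1 < (n::nat)" "d2 < n" "(i+d1) mod n = (i+d2) mod n" shows "d1 = d2"
proof (rule ccontr)
  assume ne: "d1 \<noteq> d2"
  have "int ((i+d1) mod n) = int ((i+d2) mod n)" using assms(3) by simp
  then have "(int i + int d1) mod int n = (int i + int d2) mod int n" by (simp add: of_nat_mod)
  then have "int n dvd (int i + int d1) - (int i + int d2)" by (simp add: mod_eq_dvd_iff)
  then have "int n dvd int d1 - int d2" by simp
  moreover have "int d1 - int d2 \<noteq> 0" using ne by simp
  ultimately have "\<bar>int n\<bar> \<le> \<bar>int d1 - int d2\<bar>" using dvd_imp_le_int by blast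
  then show False using assms by simp
qed

lemma cover4:
  assumes "0<a" "a<b" "b<c" "c<3*k" "a \<le> k" "b - a \<le> k" "c - b \<le> k" "3*k - c \<le> k"
  shows "is_cover k {i mod (3*k), (i+a) mod (3*k), (i+b) mod (3*k), (i+c) mod (3*k)}"
    and "card {i mod (3*k), (i+a) mod (3*k), (i+b) mod (3*k), (i+c) mod (3*k)} = 4"
proof -
  let ?n = "3*k"
  have np: "0 < ?n" using assms by simp
  have ne: "\<And>d1 d2. d1 < ?n \<Longrightarrow> d2 < ?n \<Longrightarrow> d1 \<noteq> d2 \<Longrightarrow> (i+d1) mod ?n \<noteq> (i+d2) mod ?n"
    using modinj by blast
  have n1: "i mod ?n \<noteq> (i+a) mod ?n" using ne[of 0 a] assms by simp
  have n2: "i mod ?n \<noteq> (i+b) mod ?n" using ne[of 0 b] assms by simp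
  have n3: "i mod ?n \<noteq> (i+c) mod ?n" using ne[of 0 c] assms by simp
  have n4: "(i+a) mod ?n \<noteq> (i+b) mod ?n" using ne[of a b] assms by simp
  have n5: "(i+a) mod ?n \<noteq> (i+c) mod ?n" using ne[of a c] assms by simp
  have n6: "(i+b) mod ?n \<noteq> (i+c) mod ?n" using ne[of b c] assms by simp
  show "card {i mod (3*k), (i+a) mod (3*k), (i+b) mod (3*k), (i+c) mod (3*k)} = 4"
    using n1 n2 n3 n4 n5 n6 by simp
  show "is_cover k {i mod (3*k), (i+a) mod (3*k), (i+b) mod (3*k), (i+c) mod (3*k)}"
    unfolding is_cover_def
  proof (intro conjI ballI)
    show "{i mod (3*k), (i+a) mod (3*k), (i+b) mod (3*k), (i+c) mod (3*k)} \<subseteq> Zn k"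
      using np by (auto simp: Zn_def)
  next
    fix m assume "m \<in> Zn k"
    then have m: "m < ?n" by (simp add: Zn_def)
    define e where "e = (m + ?n - i mod ?n) mod ?n"
    have el: "e < ?n" using np by (simp add: e_def)
    have me: "m = (i + e) mod ?n"
    proof -
      have "(i + e) mod ?n = (i mod ?n + (m + ?n - i mod ?n)) mod ?n"
        unfolding e_def by (metis mod_add_eq mod_mod_trivial)
      also have "i mod ?n + (m + ?n - i mod ?n) = m + ?n"
        using np mod_less_divisor[OF np, of i] by linarith
      finally show ?thesis using m by simp
    qed
    have key: "\<And>j d. j < k \<Longrightarrow> e + j = d \<Longrightarrow> (i+d) mod ?n \<in> Cset k m"
    proof -
      fix j d assume "j < k" "e + j = d"
      have "(m + j) mod ?n = (i + d) mod ?n" using me \<open>e+j=d\<close>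
        by (metis add.assoc mod_add_left_eq)
      then show "(i+d) mod ?n \<in> Cset k m" unfolding Cset_def using \<open>j<k\<close> by (intro CollectI exI[of _ j]) simp
    qed
    have w: "(i + ?n) mod ?n = i mod ?n" by simp
    consider "e = 0" | "0 < e \<and> e \<le> a" | "a < e \<and> e \<le> b" | "b < e \<and> e \<le> c" | "c < e" by linarith
    then show "{i mod (3*k), (i+a) mod (3*k), (i+b) mod (3*k), (i+c) mod (3*k)} \<inter> Cset k m \<noteq> {}"
    proof cases
      case 1 then have "(i+0) mod ?n \<in> Cset k m" using key[of 0 0] assms by simp
      then show ?thesis by auto
    next
      case 2 then have "(i+a) mod ?n \<in> Cset k m" by (intro key[of "a-e" a]) (use assms in linarith)+
      then show ?thesis by auto
    next
      case 3 then have "(i+b) mod ?n \<in> Cset k m" by (intro key[of "b-e" b]) (use assms in linarith)+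
      then show ?thesis by auto
    next
      case 4 then have "(i+c) mod ?n \<in> Cset k m" by (intro key[of "c-e" c]) (use assms in linarith)+
      then show ?thesis by auto
    next
      case 5 then have "(i+?n) mod ?n \<in> Cset k m" by (intro key[of "?n-e" ?n]) (use assms el in linarith)+
      then show ?thesis using w by auto
    qed
  qed
qed

lemma Cset_mod: "Cset k (m mod (3*k)) = Cset k m"
  unfolding Cset_def by (simp add: mod_add_left_eq)

lemma two_elems: assumes "2 \<le> card A" obtains x y where "x \<in> A" "y \<in> A" "x \<noteq> y"
proof -
  have fin: "finite A" using assms by (metis card.infinite not_numeral_le_zero)
  have "A \<noteq> {}" using assms by auto
  then obtain x where x: "x \<in> A" by blast
  have "card (A - {x}) \<ge> 1" using card_Diff_singleton[OF x] assms by simp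
  then have "A - {x} \<noteq> {}" by (metis card.empty not_one_le_zero)
  then obtain y where "y \<in> A - {x}" by blast
  then show ?thesis using that x by blast
qed

theorem mainTheorem8:
  fixes k :: nat and W :: "nat set" and i :: nat
  assumes "k \<ge> 2"
    and "W \<subseteq> Zn k"
    and "\<forall>j \<in> Zn k. card (xset k j \<inter> W) \<ge> 1"
    and "\<forall>j \<in> Zn k. card (Cset k j \<inter> (Zn k - W)) \<ge> 2"
    and "i \<in> Zn k - W"
    and "(Zn k - W) \<inter> cinterval (3*k) (i + 2*k) (i + 2*k + omega k (Zn k - W) i) \<noteq> {}"
  shows "\<exists>x. is_cover k x \<and> card x = 4 \<and> x \<inter> W = {}"
proof -
  define n where "n = 3*k"
  define Wc where "Wc = Zn k - W"
  have np: "0 < n" using assms(1) n_def by simp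
  have iWc: "i \<in> Wc" using assms(5) Wc_def by simp
  have iltn: "i < n" using iWc by (simp add: Wc_def Zn_def n_def)
  have C2: "\<exists>j1 j2. j1 < k \<and> j2 < k \<and> j1 \<noteq> j2 \<and> (m+j1) mod n \<in> Wc \<and> (m+j2) mod n \<in> Wc" for m
  proof -
    have "m mod n \<in> Zn k" using np by (simp add: Zn_def n_def)
    then have "card (Cset k m \<inter> Wc) \<ge> 2" using assms(4) Cset_mod[of k m] unfolding Wc_def n_def by metis
    then obtain x y where xy: "x \<in> Cset k m \<inter> Wc" "y \<in> Cset k m \<inter> Wc" "x \<noteq> y" by (rule two_elems)
    then obtain j1 j2 where "x = (m+j1) mod n" "j1 < k" "y = (m+j2) mod n" "j2 < k"
      by (auto simp: Cset_def n_def)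
    then show ?thesis using xy by blast
  qed
  define om where "om = omega k Wc i"
  have omdef: "om = (LEAST t. (i + k + t) mod n \<in> Wc)" by (simp add: om_def omega_def n_def)
  obtain j1 j2 where j12: "j1 < k" "j2 < k" "j1 \<noteq> j2" "(i+k+j1) mod n \<in> Wc" "(i+k+j2) mod n \<in> Wc"
    using C2[of "i+k"] by blast
  have "om \<le> j1" "om \<le> j2" using j12 unfolding omdef by (auto intro: Least_le)
  then have omk: "om \<le> k - 2" using j12 by linarith
  have omWc: "(i+k+om) mod n \<in> Wc" using j12(4) unfolding omdef by (rule LeastI)
  have omnot: "t < om \<Longrightarrow> (i+k+t) mod n \<notin> Wc" for t unfolding omdef by (rule not_less_Least)
  obtain l where l: "l \<in> Wc" "l \<in> cinterval n (i + 2*k) (i + 2*k + om)"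
    using assms(6) unfolding Wc_def[symmetric] om_def[symmetric] n_def[symmetric] by blast
  have omn: "om < n" using omk n_def assms(1) by simp
  obtain s where s: "l = (i + 2*k + s) mod n" "s \<le> om"
    using l(2) cint[OF omn, of "i+2*k"] unfolding cinterval_def by auto
  have om1: "om \<ge> 1"
  proof (rule ccontr)
    assume "\<not> om \<ge> 1"
    then have "om = 0" "s = 0" using s by auto
    then have "xset k i \<subseteq> Wc" using iWc iltn omWc l s
      by (auto simp: xset_def n_def[symmetric])
    then have "xset k i \<inter> W = {}" by (auto simp: Wc_def)
    then show False using assms(3) assms(5) by fastforce
  qed
  obtain j1' j2' where j12': "j1' < k" "(i+om+j1') mod n \<in> Wc"
    using C2[of "i+om"] by blast
  have jlt: "j1' < k - om"
  proof (rule ccontr)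
    assume "\<not> j1' < k - om"
    then have "i+om+j1' = i+k+(om+j1'-k)" "om+j1'-k < om" using j12' omk by linarith+
    then show False using omnot j12'(2) by metis
  qed
  define x where "x = {i mod (3*k), (i+(om+j1')) mod (3*k), (i+(k+om)) mod (3*k), (i+(2*k+s)) mod (3*k)}"
  have cv: "is_cover k x" "card x = 4" unfolding x_def
    by (rule cover4; use omk om1 jlt s assms(1) in linarith)+
  have "x \<subseteq> Wc" unfolding x_def n_def[symmetric]
    using iWc iltn j12'(2) omWc l(1) s(1) by (simp add: ac_simps)
  then have "x \<inter> W = {}" by (auto simp: Wc_def)
  then show ?thesis using cv by blast
qed

end
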